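(* Let $X\subseteq[0,1]^n$ be closed and suppose $X$ has a rationally outgoing $k$-tangent $u$ at $x$, witnessed by a rational simplex $S\subseteq[0,1]^n$, a face $F$ of $S$ and $\lambda\in\mathbb{R}^k_{>0}$ with $C_{x,u,\lambda}\subseteq S$, $C_{x,u,\lambda}\not\subseteq F$, $F\cap X=S\cap X$. Let $f,g\in\mathcal{M}([0,1]^n)$ satisfy $f^{-1}(0)=F$ and $g^{-1}(0)=S$. Then $f|_X$ and $g|_X$ have the same zero set in $X$ (so $f|_X$ lies in a given maximal ideal of $\mathcal{M}(X)$ iff $g|_X$ does), but $f|_X$ does not belong to the principal ideal of $\mathcal{M}(X)$ generated by $g|_X$; i.e., there is no integer $m>0$ with $f|_X\le m\,g|_X$. Consequently $\mathcal{M}(X)$ is not strongly semisimple.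
   Context: $\mathcal{M}([0,1]^n)$ denotes the MV-algebra of continuous functions $[0,1]^n\to[0,1]$ that are piecewise affine linear with finitely many pieces having integer coefficients, with pointwise MV-operations; $\mathcal{M}(X)$ is the MV-algebra of their restrictions to $X$. The principal ideal generated by $a$ is $\{b\mid b\le ma\text{ for some integer }m>0\}$ ($ma$ is the $m$-fold truncated sum). Maximal ideals of $\mathcal{M}(X)$ are exactly $\{h\mid h(y)=0\}$, $y\in X$. Strong semisimplicity: every principal ideal is an intersection of maximal ideals. $k$-tangents: For pairwise orthogonal unit vectors $u=(u_1,\ldots,u_k)$ in $\mathbb{R}^n$, $\mathsf p_l$ the orthogonal projection onto $\mathbb{R}u_1+\cdots+\mathbb{R}u_l$ ($\mathsf p_0=0$), $u$ is a $k$-tangent of $X$ at $x$ if there is a sequence $x_i\in X$, $x_i\to x$, with $x_i-x\notin\mathbb{R}u_1+\cdots+\mathbb{R}u_k$, and $\lim_i \dfrac{x_i-x-\mathsf{p}_{l-1}(x_i-x)}{\|x_i-x-\mathsf{p}_{l-1}(x_i-x)\|}=u_l$ for $l=1,\ldots,k$. $C_{x,u,\lambda}=\mathrm{conv}(x,\,x+\lambda_1u_1,\,\ldots,\,x+\lambda_1u_1+\cdots+\lambda_ku_k)$. Rationally outgoing: there exist a rational simplex $S$, a face $F$ of $S$, and $\lambda\in\mathbb{R}^k_{>0}$ with $C_{x,u,\lambda}\subseteq S$, $C_{x,u,\lambda}\not\subseteq F$, $F\cap X=S\cap X$. *)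

theory Defs
  imports "HOL-Analysis.Analysis"
begin

definition unit_cube :: "(real^'n) set" where
  "unit_cube = cbox 0 1"

definition mcnaughton :: "(real^'n \<Rightarrow> real) \<Rightarrow> bool" where
  "mcnaughton f \<longleftrightarrow>
     continuous_on unit_cube f \<and> f ` unit_cube \<subseteq> {0..1} \<and>
     (\<exists>P :: ((real^'n) \<times> real) set. finite P \<and>
        (\<forall>(a,b)\<in>P. (\<forall>i. a $ i \<in> \<int>) \<and> b \<in> \<int>) \<and>
        (\<forall>y\<in>unit_cube. \<exists>(a,b)\<in>P. f y = a \<bullet> y + b))"

definition restr :: "(real^'n) set \<Rightarrow> (real^'n \<Rightarrow> real) \<Rightarrow> (real^'n \<Rightarrow> real)" where
  "restr X f = (\<lambda>y. if y \<in> X then f y else 0)"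

definition MX :: "(real^'n) set \<Rightarrow> (real^'n \<Rightarrow> real) set" where
  "MX X = {restr X f | f. mcnaughton f}"

definition mv_oplus :: "('a \<Rightarrow> real) \<Rightarrow> ('a \<Rightarrow> real) \<Rightarrow> ('a \<Rightarrow> real)" where
  "mv_oplus a b = (\<lambda>y. min 1 (a y + b y))"

fun mv_mult :: "nat \<Rightarrow> ('a \<Rightarrow> real) \<Rightarrow> ('a \<Rightarrow> real)" where
  "mv_mult 0 a = (\<lambda>y. 0)"
| "mv_mult (Suc m) a = mv_oplus a (mv_mult m a)"

definition mv_ideal :: "(real^'n) set \<Rightarrow> (real^'n \<Rightarrow> real) set \<Rightarrow> bool" where
  "mv_ideal X I \<longleftrightarrow> I \<subseteq> MX X \<and> (\<lambda>y. 0) \<in> I \<and>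
     (\<forall>a\<in>I. \<forall>b\<in>MX X. (\<forall>y\<in>X. b y \<le> a y) \<longrightarrow> b \<in> I) \<and>
     (\<forall>a\<in>I. \<forall>b\<in>I. mv_oplus a b \<in> I)"

definition maximal_mv_ideal :: "(real^'n) set \<Rightarrow> (real^'n \<Rightarrow> real) set \<Rightarrow> bool" where
  "maximal_mv_ideal X I \<longleftrightarrow> mv_ideal X I \<and> I \<noteq> MX X \<and>
     (\<forall>J. mv_ideal X J \<and> I \<subseteq> J \<longrightarrow> J = I \<or> J = MX X)"

definition principal_ideal :: "(real^'n) set \<Rightarrow> (real^'n \<Rightarrow> real) \<Rightarrow> (real^'n \<Rightarrow> real) set" where
  "principal_ideal X a = {b \<in> MX X. \<exists>m>0. \<forall>y\<in>X. b y \<le> mv_mult m a y}"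

text \<open>Strong semisimplicity: every principal ideal is an intersection of maximal ideals
  (the intersection is taken inside M(X), so the empty family gives M(X)).\<close>
definition strongly_semisimple :: "(real^'n) set \<Rightarrow> bool" where
  "strongly_semisimple X \<longleftrightarrow>
     (\<forall>a\<in>MX X. \<exists>\<M>. (\<forall>J\<in>\<M>. maximal_mv_ideal X J) \<and>
        principal_ideal X a = MX X \<inter> \<Inter>\<M>)"

definition rational_simplex :: "(real^'n) set \<Rightarrow> bool" where
  "rational_simplex S \<longleftrightarrow> (\<exists>V. finite V \<and> V \<noteq> {} \<and> \<not> affine_dependent V \<and>
     (\<forall>v\<in>V. \<forall>i. v $ i \<in> \<rat>) \<and> S = convex hull V)"

definition proj_l :: "(nat \<Rightarrow> real^'n) \<Rightarrow> nat \<Rightarrow> real^'n \<Rightarrow> real^'n" where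
  "proj_l u l v = (\<Sum>j=1..l. (v \<bullet> u j) *\<^sub>R u j)"

definition orthonormal_family :: "nat \<Rightarrow> (nat \<Rightarrow> real^'n) \<Rightarrow> bool" where
  "orthonormal_family k u \<longleftrightarrow> (\<forall>l\<in>{1..k}. norm (u l) = 1) \<and>
     (\<forall>l\<in>{1..k}. \<forall>l'\<in>{1..k}. l \<noteq> l' \<longrightarrow> u l \<bullet> u l' = 0)"

definition k_tangent :: "(real^'n) set \<Rightarrow> real^'n \<Rightarrow> nat \<Rightarrow> (nat \<Rightarrow> real^'n) \<Rightarrow> bool" where
  "k_tangent X x k u \<longleftrightarrow> orthonormal_family k u \<and>
     (\<exists>xs :: nat \<Rightarrow> real^'n. (\<forall>i. xs i \<in> X) \<and> xs \<longlonglongrightarrow> x \<and>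
        (\<forall>i. xs i - x \<notin> span (u ` {1..k})) \<and>
        (\<forall>l\<in>{1..k}. (\<lambda>i. (1 / norm (xs i - x - proj_l u (l - 1) (xs i - x))) *\<^sub>R
                            (xs i - x - proj_l u (l - 1) (xs i - x))) \<longlonglongrightarrow> u l))"

definition Ccone :: "real^'n \<Rightarrow> nat \<Rightarrow> (nat \<Rightarrow> real^'n) \<Rightarrow> (nat \<Rightarrow> real) \<Rightarrow> (real^'n) set" where
  "Ccone x k u lam = convex hull {x + (\<Sum>j=1..l. lam j *\<^sub>R u j) | l. l \<le> k}"

end

theory Submission
  imports Defs
begin


lemma mv_mult_eq:
  assumes "h y \<ge> 0" shows "mv_mult m h y = min 1 (real m * h y)"
  using assms by (induction m) (auto simp: mv_oplus_def algebra_simps min_def)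

lemma mcn_bounds: "mcnaughton f \<Longrightarrow> y \<in> unit_cube \<Longrightarrow> 0 \<le> f y \<and> f y \<le> 1"
  unfolding mcnaughton_def by auto

lemma mcn_const: "c \<in> \<int> \<Longrightarrow> 0 \<le> c \<Longrightarrow> c \<le> 1 \<Longrightarrow> mcnaughton (\<lambda>y. c)"
  unfolding mcnaughton_def
  by (intro conjI continuous_intros exI[of _ "{(0,c)}"]) auto

lemma mcn_oplus:
  fixes f g :: "real^'n \<Rightarrow> real"
  assumes f: "mcnaughton f" and g: "mcnaughton g"
  shows "mcnaughton (\<lambda>y. min 1 (f y + g y))"
proof -
  obtain P :: "((real^'n) \<times> real) set" where P: "finite P" "\<forall>(a,b)\<in>P. (\<forall>i. a $ i \<in> \<int>) \<and> b \<in> \<int>"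
    "\<forall>y\<in>(unit_cube::(real^'n) set). \<exists>(a,b)\<in>P. f y = a \<bullet> y + b" using f unfolding mcnaughton_def by blast
  obtain Q :: "((real^'n) \<times> real) set" where Q: "finite Q" "\<forall>(a,b)\<in>Q. (\<forall>i. a $ i \<in> \<int>) \<and> b \<in> \<int>"
    "\<forall>y\<in>(unit_cube::(real^'n) set). \<exists>(a,b)\<in>Q. g y = a \<bullet> y + b" using g unfolding mcnaughton_def by blast
  define R where "R = insert (0,1) ((\<lambda>((a,b),(c,d)). (a+c, b+d)) ` (P \<times> Q))"
  have "finite R" using P Q by (simp add: R_def)
  moreover have "\<forall>(a,b)\<in>R. (\<forall>i. a $ i \<in> \<int>) \<and> b \<in> \<int>"
    using P(2) Q(2) by (fastforce simp: R_def)
  moreover have "\<forall>y\<in>unit_cube. \<exists>(a,b)\<in>R. min 1 (f y + g y) = a \<bullet> y + b"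
  proof
    fix y :: "real^'n" assume y: "y \<in> unit_cube"
    obtain a b where ab: "(a,b)\<in>P" "f y = a \<bullet> y + b" using P(3) y by blast
    obtain c d where cd: "(c,d)\<in>Q" "g y = c \<bullet> y + d" using Q(3) y by blast
    show "\<exists>(a,b)\<in>R. min 1 (f y + g y) = a \<bullet> y + b"
    proof (cases "f y + g y \<le> 1")
      case True
      then show ?thesis using ab cd
        by (intro bexI[of _ "(a+c,b+d)"]) (auto simp: R_def inner_add_left intro!: image_eqI[of _ _ "((a,b),(c,d))"])
    next
      case False then show ?thesis by (intro bexI[of _ "(0,1)"]) (auto simp: R_def)
    qed
  qed
  moreover have fc: "continuous_on unit_cube f" "f ` unit_cube \<subseteq> {0..1}"
    and gc: "continuous_on unit_cube g" "g ` unit_cube \<subseteq> {0..1}"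
    using f g unfolding mcnaughton_def by auto
  moreover have "continuous_on unit_cube (\<lambda>y. min 1 (f y + g y))"
    using fc gc by (intro continuous_intros)
  moreover have "(\<lambda>y. min 1 (f y + g y)) ` unit_cube \<subseteq> {0..1}"
    using fc(2) gc(2) by (force simp: image_subset_iff)
  ultimately show ?thesis unfolding mcnaughton_def by (intro conjI exI[of _ R]) blast+
qed

lemma MX_oplus: "a \<in> MX X \<Longrightarrow> b \<in> MX X \<Longrightarrow> mv_oplus a b \<in> MX X"
proof -
  assume "a \<in> MX X" "b \<in> MX X"
  then obtain f g where fg: "mcnaughton f" "mcnaughton g" "a = restr X f" "b = restr X g"
    unfolding MX_def by blast
  have "mv_oplus a b = restr X (\<lambda>y. min 1 (f y + g y))"
    by (auto simp: fg mv_oplus_def restr_def)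
  then show ?thesis using mcn_oplus[OF fg(1,2)] unfolding MX_def by blast
qed

lemma MX_bounds: "X \<subseteq> unit_cube \<Longrightarrow> a \<in> MX X \<Longrightarrow> y \<in> X \<Longrightarrow> 0 \<le> a y \<and> a y \<le> 1"
  unfolding MX_def restr_def using mcn_bounds by fastforce

lemma MX_zero: "(\<lambda>y. 0) \<in> MX X"
proof -
  have "(\<lambda>y. 0) = restr X (\<lambda>y. 0)" by (auto simp: restr_def)
  then show ?thesis unfolding MX_def using mcn_const[of 0] by auto
qed

lemma MX_one: "restr X (\<lambda>y. 1) \<in> MX X"
  unfolding MX_def using mcn_const[of 1] by auto


lemma pl1d:
  fixes \<phi> :: "real \<Rightarrow> real" and Q :: "(real \<times> real) set"
  assumes cont: "continuous_on {0..1} \<phi>" and fin: "finite Q"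
    and pc: "\<forall>t\<in>{0..1}. \<exists>q\<in>Q. \<phi> t = fst q * t + snd q"
    and bd: "\<forall>q\<in>Q. \<bar>fst q\<bar> \<le> M"
  shows "\<bar>\<phi> 1 - \<phi> 0\<bar> \<le> M"
proof -
  define E where "E = (\<Union>q1\<in>Q. \<Union>q2\<in>Q - {q1}. {t. fst q1 * t + snd q1 = fst q2 * t + snd q2})"
  have finE: "finite E"
    unfolding E_def
  proof (intro finite_UN_I fin finite_Diff)
    fix q1 q2 assume "q1 \<in> Q" "q2 \<in> Q - {q1}"
    then have ne: "q1 \<noteq> q2" by auto
    show "finite {t. fst q1 * t + snd q1 = fst q2 * t + snd q2}"
    proof (cases "fst q1 = fst q2")
      case True
      then have "snd q1 \<noteq> snd q2" using ne by (metis prod_eqI)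
      then show ?thesis using True by simp
    next
      case False
      have "{t. fst q1 * t + snd q1 = fst q2 * t + snd q2} \<subseteq> {(snd q2 - snd q1) / (fst q1 - fst q2)}"
        using False by (auto simp: field_simps)
      then show ?thesis using finite_subset by blast
    qed
  qed
  define P where "P t = (SOME q. q \<in> Q \<and> \<phi> t = fst q * t + snd q)" for t
  have P: "P t \<in> Q \<and> \<phi> t = fst (P t) * t + snd (P t)" if "t \<in> {0..1}" for t
    unfolding P_def by (rule someI_ex) (use pc that in blast)
  define D where "D t = fst (P t)" for t
  have der: "(\<phi> has_vector_derivative D t) (at t)" if t: "t \<in> {0<..<1} - E" for t
  proof -
    define q where "q = P t"
    have q: "q \<in> Q" "\<phi> t = fst q * t + snd q" using P[of t] t by (auto simp: q_def)
    define A where "A q' = {s \<in> {0..1}. \<phi> s = fst q' * s + snd q'}" for q'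
    have clA: "closed (A q')" for q'
    proof -
      have "closed {s \<in> {0..1}. \<phi> s - (fst q' * s + snd q') = 0}"
        by (intro continuous_closed_preimage_constant continuous_intros cont)
      then show ?thesis unfolding A_def by simp
    qed
    define U where "U = {0<..<1} - (\<Union>q'\<in>Q - {q}. A q')"
    have oU: "open U" unfolding U_def using clA fin by (intro open_Diff closed_UN) auto
    have tU: "t \<in> U"
    proof -
      have "t \<notin> A q'" if "q' \<in> Q - {q}" for q'
      proof
        assume "t \<in> A q'"
        then have "t \<in> E" unfolding E_def A_def using q that by auto
        then show False using t by auto
      qed
      then show ?thesis using t unfolding U_def by auto
    qed
    have eqU: "\<phi> s = fst q * s + snd q" if s: "s \<in> U" for s
    proof -
      have s01: "s \<in> {0..1}" using s unfolding U_def by auto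
      have "P s = q"
      proof (rule ccontr)
        assume "P s \<noteq> q"
        then have "s \<in> A (P s)" "P s \<in> Q - {q}" using P[OF s01] s01 unfolding A_def by auto
        then show False using s unfolding U_def by auto
      qed
      then show ?thesis using P[OF s01] by simp
    qed
    have "((\<lambda>s. fst q * s + snd q) has_vector_derivative fst q) (at t)"
      unfolding has_real_derivative_iff_has_vector_derivative[symmetric]
      by (auto intro!: derivative_eq_intros)
    then have "(\<phi> has_vector_derivative fst q) (at t)"
      by (rule has_vector_derivative_transform_within_open[OF _ oU tU]) (use eqU in auto)
    then show ?thesis by (simp add: D_def q_def)
  qed
  have int: "(D has_integral (\<phi> 1 - \<phi> 0)) {0..1}"
    by (rule fundamental_theorem_of_calculus_interior_strong[OF finE _ der cont]) auto
  have M0: "0 \<le> M" using P[of 0] bd by force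
  have "norm (\<phi> 1 - \<phi> 0) \<le> M * Henstock_Kurzweil_Integration.content (cbox (0::real) 1)"
    by (rule has_integral_bound[OF M0]) (use int P bd in \<open>auto simp: D_def\<close>)
  then show ?thesis by simp
qed

lemma cube_seg:
  assumes "y \<in> (unit_cube::(real^'n) set)" "z \<in> unit_cube" "t \<in> {0..1}"
  shows "z + t *\<^sub>R (y - z) \<in> unit_cube"
proof -
  have "convex (unit_cube::(real^'n) set)" unfolding unit_cube_def by (rule convex_box)
  then have "(1 - t) *\<^sub>R z + t *\<^sub>R y \<in> unit_cube"
    using assms by (intro convexD) auto
  moreover have "(1 - t) *\<^sub>R z + t *\<^sub>R y = z + t *\<^sub>R (y - z)" by (simp add: algebra_simps)
  ultimately show ?thesis by simp
qed

lemma mcn_lipschitz: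
  fixes h :: "real^'n \<Rightarrow> real"
  assumes "mcnaughton h"
  shows "\<exists>L\<ge>0. \<forall>y\<in>unit_cube. \<forall>z\<in>unit_cube. \<bar>h y - h z\<bar> \<le> L * norm (y - z)"
proof -
  obtain P :: "((real^'n) \<times> real) set" where P: "finite P"
    "\<forall>y\<in>(unit_cube::(real^'n) set). \<exists>(a,b)\<in>P. h y = a \<bullet> y + b"
    and hc: "continuous_on unit_cube h"
    using assms unfolding mcnaughton_def by blast
  define L where "L = (\<Sum>p\<in>P. norm (fst p))"
  have L0: "L \<ge> 0" unfolding L_def by (simp add: sum_nonneg)
  have Lp: "norm (fst p) \<le> L" if "p \<in> P" for p
    unfolding L_def using P(1) that by (intro member_le_sum) auto
  have "\<bar>h y - h z\<bar> \<le> L * norm (y - z)" if y: "y \<in> unit_cube" and z: "z \<in> unit_cube" for y z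
  proof -
    define \<phi> where "\<phi> t = h (z + t *\<^sub>R (y - z))" for t
    define Q where "Q = (\<lambda>p. (fst p \<bullet> (y - z), fst p \<bullet> z + snd p)) ` P"
    have "continuous_on {0..1} \<phi>"
      unfolding \<phi>_def
      by (rule continuous_on_compose2[OF hc]) (auto intro!: continuous_intros cube_seg y z)
    moreover have "finite Q" using P(1) by (simp add: Q_def)
    moreover have "\<forall>t\<in>{0..1}. \<exists>q\<in>Q. \<phi> t = fst q * t + snd q"
    proof
      fix t :: real assume t: "t \<in> {0..1}"
      obtain a b where ab: "(a,b) \<in> P" "h (z + t *\<^sub>R (y - z)) = a \<bullet> (z + t *\<^sub>R (y - z)) + b"
        using P(2) cube_seg[OF y z t] by blast
      show "\<exists>q\<in>Q. \<phi> t = fst q * t + snd q"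
        by (rule bexI[of _ "(a \<bullet> (y - z), a \<bullet> z + b)"])
          (use ab in \<open>auto simp: \<phi>_def Q_def inner_add_right algebra_simps intro!: image_eqI[of _ _ "(a,b)"]\<close>)
    qed
    moreover have "\<forall>q\<in>Q. \<bar>fst q\<bar> \<le> L * norm (y - z)"
    proof
      fix q assume "q \<in> Q"
      then obtain p where p: "p \<in> P" "q = (fst p \<bullet> (y - z), fst p \<bullet> z + snd p)" unfolding Q_def by auto
      have "\<bar>fst p \<bullet> (y - z)\<bar> \<le> norm (fst p) * norm (y - z)" by (rule Cauchy_Schwarz_ineq2)
      also have "\<dots> \<le> L * norm (y - z)" using Lp[OF p(1)] by (intro mult_right_mono) auto
      finally show "\<bar>fst q\<bar> \<le> L * norm (y - z)" using p by simp
    qed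
    ultimately have "\<bar>\<phi> 1 - \<phi> 0\<bar> \<le> L * norm (y - z)" by (rule pl1d)
    then show ?thesis by (simp add: \<phi>_def)
  qed
  then show ?thesis using L0 by blast
qed


lemma ortho_inner:
  assumes "orthonormal_family k u" "j \<in> {1..k}" "l \<in> {1..k}"
  shows "u j \<bullet> u l = (if j = l then 1 else 0)"
  using assms unfolding orthonormal_family_def by (auto simp: dot_square_norm)

lemma inner_sum_u:
  assumes "orthonormal_family k u" "l \<le> k" "l' \<in> {1..k}"
  shows "(\<Sum>j=1..l. c j *\<^sub>R u j) \<bullet> u l' = (if l' \<le> l then c l' else 0)"
proof -
  have "(\<Sum>j=1..l. c j *\<^sub>R u j) \<bullet> u l' = (\<Sum>j=1..l. c j * (u j \<bullet> u l'))"
    by (simp add: inner_sum_left)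
  also have "\<dots> = (\<Sum>j=1..l. if j = l' then c j else 0)"
    using assms by (intro sum.cong refl) (auto simp: ortho_inner[OF assms(1)])
  also have "\<dots> = (if l' \<le> l then c l' else 0)"
    using assms by (simp add: sum.delta')
  finally show ?thesis .
qed

lemma proj_Suc: "proj_l u (Suc l) d = proj_l u l d + (d \<bullet> u (Suc l)) *\<^sub>R u (Suc l)"
  unfolding proj_l_def by simp

lemma proj_0: "proj_l u 0 d = 0"
  unfolding proj_l_def by simp

lemma proj_span: "l \<le> k \<Longrightarrow> proj_l u l d \<in> span (u ` {1..k})"
  unfolding proj_l_def by (intro span_sum span_mul span_base) auto

lemma proj_inner:
  assumes "orthonormal_family k u" "l \<le> k" "l' \<in> {1..k}"
  shows "proj_l u l d \<bullet> u l' = (if l' \<le> l then d \<bullet> u l' else 0)"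
  unfolding proj_l_def by (rule inner_sum_u[OF assms])

definition ee :: "(nat \<Rightarrow> real^'n) \<Rightarrow> nat \<Rightarrow> real^'n \<Rightarrow> real^'n" where
  "ee u l d = d - proj_l u (l - 1) d"

lemma ee_1: "ee u 1 d = d" by (simp add: ee_def proj_0)

lemma ee_inner:
  assumes "orthonormal_family k u" "l \<in> {1..k}"
  shows "ee u l d \<bullet> u l = d \<bullet> u l"
proof -
  have "proj_l u (l - 1) d \<bullet> u l = 0" using assms proj_inner[OF assms(1), of "l - 1" l d] by auto
  then show ?thesis by (simp add: ee_def inner_diff_left)
qed

lemma ee_Suc:
  assumes "l \<ge> 1"
  shows "ee u (Suc l) d = ee u l d - (d \<bullet> u l) *\<^sub>R u l"
proof -
  obtain l0 where "l = Suc l0" using assms by (cases l) auto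
  then show ?thesis by (simp add: ee_def proj_Suc)
qed

lemma ee_norm_Suc:
  assumes "orthonormal_family k u" "l \<in> {1..k}"
  shows "norm (ee u (Suc l) d) \<le> norm (ee u l d)"
proof -
  have n1: "u l \<bullet> u l = 1" using ortho_inner[OF assms(1) assms(2) assms(2)] by simp
  define e where "e = ee u l d"
  define a where "a = d \<bullet> u l"
  have ea: "e \<bullet> u l = a" unfolding e_def a_def by (rule ee_inner[OF assms])
  have "(norm (ee u (Suc l) d))\<^sup>2 = (e - a *\<^sub>R u l) \<bullet> (e - a *\<^sub>R u l)"
    using assms by (simp add: ee_Suc e_def a_def power2_norm_eq_inner)
  also have "\<dots> = e \<bullet> e - 2 * a * (e \<bullet> u l) + a * a * (u l \<bullet> u l)"
    by (simp add: inner_diff_left inner_diff_right inner_commute algebra_simps)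
  also have "\<dots> = (norm e)\<^sup>2 - a\<^sup>2"
  proof -
    have "e \<bullet> e = (norm e)\<^sup>2" by (rule dot_square_norm)
    then show ?thesis by (simp add: ea n1 power2_eq_square)
  qed
  also have "\<dots> = (norm (ee u l d))\<^sup>2 - (d \<bullet> u l)\<^sup>2" by (simp add: e_def a_def)
  finally have "(norm (ee u (Suc l) d))\<^sup>2 = (norm (ee u l d))\<^sup>2 - (d \<bullet> u l)\<^sup>2" .
  then have "(norm (ee u (Suc l) d))\<^sup>2 \<le> (norm (ee u l d))\<^sup>2" by simp
  then show ?thesis by (rule power2_le_imp_le) simp
qed

lemma ee_norm_mono:
  assumes "orthonormal_family k u" "1 \<le> l" "l \<le> l'" "l' \<le> Suc k"
  shows "norm (ee u l' d) \<le> norm (ee u l d)"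
  using assms(3,4)
proof (induction l' rule: dec_induct)
  case base then show ?case by simp
next
  case (step m)
  have "norm (ee u (Suc m) d) \<le> norm (ee u m d)"
    using assms step by (intro ee_norm_Suc[OF assms(1)]) auto
  then show ?case using step by auto
qed

lemma ee_ne:
  assumes "d \<notin> span (u ` {1..k})" "l \<le> Suc k"
  shows "ee u l d \<noteq> 0"
proof
  assume "ee u l d = 0"
  then have "d = proj_l u (l - 1) d" by (simp add: ee_def)
  moreover have "proj_l u (l - 1) d \<in> span (u ` {1..k})" using assms by (intro proj_span) auto
  ultimately show False using assms by simp
qed


context
  fixes k :: nat and u :: "nat \<Rightarrow> real^'n" and xs :: "nat \<Rightarrow> real^'n" and x :: "real^'n"
  assumes ON: "orthonormal_family k u"
    and LIM: "xs \<longlonglongrightarrow> x"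
    and NS: "\<forall>i. xs i - x \<notin> span (u ` {1..k})"
    and TG: "\<forall>l\<in>{1..k}. (\<lambda>i. (1 / norm (xs i - x - proj_l u (l - 1) (xs i - x))) *\<^sub>R
                            (xs i - x - proj_l u (l - 1) (xs i - x))) \<longlonglongrightarrow> u l"
begin

lemma tg_e_ne: "l \<le> Suc k \<Longrightarrow> ee u l (xs i - x) \<noteq> 0"
  using NS by (intro ee_ne) auto

lemma tg_T1:
  assumes l: "l \<in> {1..k}"
  shows "(\<lambda>i. ((xs i - x) \<bullet> u l) / norm (ee u l (xs i - x))) \<longlonglongrightarrow> 1"
proof -
  have H: "(\<lambda>i. (1 / norm (ee u l (xs i - x))) *\<^sub>R ee u l (xs i - x)) \<longlonglongrightarrow> u l"
    using TG l by (simp add: ee_def)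
  have "(\<lambda>i. ((1 / norm (ee u l (xs i - x))) *\<^sub>R ee u l (xs i - x)) \<bullet> u l) \<longlonglongrightarrow> u l \<bullet> u l"
    by (intro tendsto_inner H tendsto_const)
  moreover have ul: "u l \<bullet> u l = 1" using ortho_inner[OF ON l l] by simp
  moreover have eq: "(\<lambda>i. ((1 / norm (ee u l (xs i - x))) *\<^sub>R ee u l (xs i - x)) \<bullet> u l)
      = (\<lambda>i. ((xs i - x) \<bullet> u l) / norm (ee u l (xs i - x)))"
    by (rule ext) (simp add: ee_inner[OF ON l])
  ultimately show ?thesis by (simp only: eq ul)
qed

lemma tg_T2:
  assumes l: "l \<in> {1..k}"
  shows "(\<lambda>i. norm (ee u (Suc l) (xs i - x)) / norm (ee u l (xs i - x))) \<longlonglongrightarrow> 0"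
proof -
  have H: "(\<lambda>i. (1 / norm (ee u l (xs i - x))) *\<^sub>R ee u l (xs i - x)) \<longlonglongrightarrow> u l"
    using TG l by (simp add: ee_def)
  have "(\<lambda>i. (1 / norm (ee u l (xs i - x))) *\<^sub>R ee u l (xs i - x)
        - (((xs i - x) \<bullet> u l) / norm (ee u l (xs i - x))) *\<^sub>R u l) \<longlonglongrightarrow> u l - 1 *\<^sub>R u l"
    by (intro tendsto_diff H tendsto_scaleR tg_T1[OF l] tendsto_const)
  then have "(\<lambda>i. (1 / norm (ee u l (xs i - x))) *\<^sub>R ee u (Suc l) (xs i - x)) \<longlonglongrightarrow> 0"
    using l by (simp add: ee_Suc scaleR_diff_right)
  then have "(\<lambda>i. norm ((1 / norm (ee u l (xs i - x))) *\<^sub>R ee u (Suc l) (xs i - x))) \<longlonglongrightarrow> 0"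
    by (rule tendsto_norm_zero)
  then show ?thesis by simp
qed

lemma tg_pos:
  assumes l: "l \<in> {1..k}"
  shows "eventually (\<lambda>i. (xs i - x) \<bullet> u l > 0) sequentially"
proof -
  have "eventually (\<lambda>i. ((xs i - x) \<bullet> u l) / norm (ee u l (xs i - x)) > 0) sequentially"
    using tg_T1[OF l] by (rule order_tendstoD) simp
  then show ?thesis
    by eventually_elim (use tg_e_ne[of l] l in \<open>auto simp: zero_less_divide_iff\<close>)
qed

lemma tg_ratio_e:
  assumes l: "l \<in> {1..k}" and l': "l < l'" "l' \<le> Suc k"
  shows "(\<lambda>i. norm (ee u l' (xs i - x)) / ((xs i - x) \<bullet> u l)) \<longlonglongrightarrow> 0"
proof -
  have "(\<lambda>i. (norm (ee u (Suc l) (xs i - x)) / norm (ee u l (xs i - x)))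
          / (((xs i - x) \<bullet> u l) / norm (ee u l (xs i - x)))) \<longlonglongrightarrow> 0 / 1"
    by (intro tendsto_divide tg_T2[OF l] tg_T1[OF l]) auto
  moreover have eq: "(\<lambda>i. (norm (ee u (Suc l) (xs i - x)) / norm (ee u l (xs i - x)))
          / (((xs i - x) \<bullet> u l) / norm (ee u l (xs i - x))))
        = (\<lambda>i. norm (ee u (Suc l) (xs i - x)) / ((xs i - x) \<bullet> u l))"
  proof (rule ext)
    fix i
    have "norm (ee u l (xs i - x)) \<noteq> 0" using tg_e_ne[of l i] l by simp
    then show "(norm (ee u (Suc l) (xs i - x)) / norm (ee u l (xs i - x)))
          / (((xs i - x) \<bullet> u l) / norm (ee u l (xs i - x)))
        = norm (ee u (Suc l) (xs i - x)) / ((xs i - x) \<bullet> u l)"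
      by (simp add: divide_divide_eq_left divide_divide_eq_right)
  qed
  ultimately have A: "(\<lambda>i. norm (ee u (Suc l) (xs i - x)) / ((xs i - x) \<bullet> u l)) \<longlonglongrightarrow> 0"
    by (simp only: eq div_0)
  show ?thesis
  proof (rule Lim_null_comparison[OF _ A])
    show "eventually (\<lambda>i. norm (norm (ee u l' (xs i - x)) / ((xs i - x) \<bullet> u l))
           \<le> norm (ee u (Suc l) (xs i - x)) / ((xs i - x) \<bullet> u l)) sequentially"
      using tg_pos[OF l]
    proof eventually_elim
      case (elim i)
      have "norm (ee u l' (xs i - x)) \<le> norm (ee u (Suc l) (xs i - x))"
        using l l' by (intro ee_norm_mono[OF ON]) auto
      then show ?case using elim by (simp add: divide_right_mono)
    qed
  qed
qed

lemma tg_ratio_a: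
  assumes l: "l \<in> {1..k}" and l': "l < l'" "l' \<le> k"
  shows "(\<lambda>i. ((xs i - x) \<bullet> u l') / ((xs i - x) \<bullet> u l)) \<longlonglongrightarrow> 0"
proof (rule Lim_null_comparison[OF _ tg_ratio_e[OF l l'(1)]])
  have l'': "l' \<in> {1..k}" using l l' by auto
  show "eventually (\<lambda>i. norm (((xs i - x) \<bullet> u l') / ((xs i - x) \<bullet> u l))
           \<le> norm (ee u l' (xs i - x)) / ((xs i - x) \<bullet> u l)) sequentially"
    using tg_pos[OF l] tg_pos[OF l'']
  proof eventually_elim
    case (elim i)
    have "(xs i - x) \<bullet> u l' = ee u l' (xs i - x) \<bullet> u l'" using ee_inner[OF ON l''] by simp
    also have "\<dots> \<le> norm (ee u l' (xs i - x)) * norm (u l')" by (rule norm_cauchy_schwarz)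
    also have "norm (u l') = 1" using ON l'' unfolding orthonormal_family_def by auto
    finally have "(xs i - x) \<bullet> u l' \<le> norm (ee u l' (xs i - x))" by simp
    then show ?case using elim l'' by (simp add: divide_right_mono)
  qed
qed (use l' in auto)

lemma tg_a0: "(\<lambda>i. (xs i - x) \<bullet> u l) \<longlonglongrightarrow> 0"
proof -
  have "(\<lambda>i. (xs i - x) \<bullet> u l) \<longlonglongrightarrow> 0 \<bullet> u l"
    by (intro tendsto_inner LIM_zero LIM tendsto_const)
  then show ?thesis by simp
qed

end


lemma sum_by_parts:
  fixes W :: "nat \<Rightarrow> real" and V :: "nat \<Rightarrow> 'a::real_vector"
  assumes "V 0 = 0"
  shows "(\<Sum>l\<le>K. (W l - W (Suc l)) *\<^sub>R V l)
       = (\<Sum>l=1..K. W l *\<^sub>R (V l - V (l - 1))) - W (Suc K) *\<^sub>R V K"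
proof (induction K)
  case 0 then show ?case using assms by simp
next
  case (Suc K)
  have "(\<Sum>l\<le>Suc K. (W l - W (Suc l)) *\<^sub>R V l)
      = (\<Sum>l\<le>K. (W l - W (Suc l)) *\<^sub>R V l) + (W (Suc K) - W (Suc (Suc K))) *\<^sub>R V (Suc K)"
    by simp
  also have "\<dots> = (\<Sum>l=1..K. W l *\<^sub>R (V l - V (l - 1))) + W (Suc K) *\<^sub>R (V (Suc K) - V K)
       - W (Suc (Suc K)) *\<^sub>R V (Suc K)"
    unfolding Suc by (simp add: algebra_simps)
  also have "\<dots> = (\<Sum>l=1..Suc K. W l *\<^sub>R (V l - V (l - 1))) - W (Suc (Suc K)) *\<^sub>R V (Suc K)"
    by simp
  finally show ?case .
qed

lemma Ccone_eq: "Ccone x k u lam = convex hull ((\<lambda>l. x + (\<Sum>j=1..l. lam j *\<^sub>R u j)) ` {..k})"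
  unfolding Ccone_def by (rule arg_cong[where f="\<lambda>A. convex hull A"]) auto

lemma cone_point:
  assumes ON: "orthonormal_family k u" and k: "k \<ge> 1"
    and lam: "\<forall>j\<in>{1..k}. lam j > 0"
    and bpos: "\<forall>l\<in>{1..k}. \<beta> l > 0"
    and b1: "\<beta> 1 < lam 1"
    and bdec: "\<forall>l\<in>{1..<k}. \<beta> (Suc l) / lam (Suc l) < \<beta> l / lam l"
  shows "x + (\<Sum>j=1..k. \<beta> j *\<^sub>R u j) \<in> rel_interior (Ccone x k u lam)"
proof -
  define V where "V l = (\<Sum>j=1..l. lam j *\<^sub>R u j)" for l
  define v where "v l = x + V l" for l
  define W where "W l = (if l = 0 then 1 else if l \<le> k then \<beta> l / lam l else 0)" for l
  define w where "w l = W l - W (Suc l)" for l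
  have wpos: "w l > 0" if lk: "l \<le> k" for l
  proof -
    consider "l = 0" | "1 \<le> l" "l < k" | "l = k" "l \<ge> 1" using lk k by linarith
    then show ?thesis
    proof cases
      case 1 then show ?thesis using k b1 lam by (simp add: w_def W_def)
    next
      case 2 then show ?thesis using bdec by (auto simp: w_def W_def)
    next
      case 3 then show ?thesis using bpos lam by (auto simp: w_def W_def)
    qed
  qed
  have wsum: "(\<Sum>l\<le>k. w l) = 1" unfolding w_def sum_telescope by (simp add: W_def)
  have Vd: "V l - V (l - 1) = lam l *\<^sub>R u l" if l1: "l \<ge> 1" for l
  proof -
    obtain l0 where "l = Suc l0" using l1 by (cases l) auto
    then show ?thesis by (simp add: V_def)
  qed
  have "(\<Sum>l\<le>k. w l *\<^sub>R v l) = (\<Sum>l\<le>k. w l) *\<^sub>R x + (\<Sum>l\<le>k. (W l - W (Suc l)) *\<^sub>R V l)"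
    by (simp add: v_def w_def scaleR_add_right sum.distrib scaleR_sum_left)
  also have "(\<Sum>l\<le>k. (W l - W (Suc l)) *\<^sub>R V l) = (\<Sum>l=1..k. W l *\<^sub>R (V l - V (l - 1)))"
    by (subst sum_by_parts) (auto simp: V_def W_def)
  also have "\<dots> = (\<Sum>l=1..k. \<beta> l *\<^sub>R u l)"
  proof (intro sum.cong refl)
    fix l assume l: "l \<in> {1..k}"
    then have "lam l > 0" using lam by auto
    then show "W l *\<^sub>R (V l - V (l - 1)) = \<beta> l *\<^sub>R u l"
    proof -
      have "V l - V (l - 1) = lam l *\<^sub>R u l" using Vd l by auto
      moreover have "W l = \<beta> l / lam l" using l by (simp add: W_def)
      ultimately show ?thesis using \<open>lam l > 0\<close> by simp
    qed
  qed
  finally have comb: "(\<Sum>l\<le>k. w l *\<^sub>R v l) = x + (\<Sum>j=1..k. \<beta> j *\<^sub>R u j)"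
    using wsum by simp
  have Vin: "V l \<bullet> u l' = (if l' \<le> l then lam l' else 0)" if "l \<le> k" "l' \<in> {1..k}" for l l'
    unfolding V_def by (rule inner_sum_u[OF ON that])
  have inj: "inj_on v {..k}"
  proof (rule inj_onI)
    fix a b assume a: "a \<in> {..k}" and b: "b \<in> {..k}" and eq: "v a = v b"
    then have eqV: "V a = V b" by (simp add: v_def)
    show "a = b"
    proof (rule ccontr)
      assume "a \<noteq> b"
      then consider "a < b" | "b < a" by linarith
      then show False
      proof cases
        case 1
        have "V a \<bullet> u b = V b \<bullet> u b" using eqV by simp
        then show False using Vin[of a b] Vin[of b b] a b 1 lam[rule_format, of b] by auto
      next
        case 2
        have "V a \<bullet> u a = V b \<bullet> u a" using eqV by simp
        then show False using Vin[of a a] Vin[of b a] a b 2 lam[rule_format, of a] by auto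
      qed
    qed
  qed
  define U where "U y = w (inv_into {..k} v y)" for y
  have Uv: "U (v l) = w l" if "l \<le> k" for l
    using inj that by (simp add: U_def inv_into_f_f)
  have "x + (\<Sum>j=1..k. \<beta> j *\<^sub>R u j)
      \<in> {y. \<exists>U. (\<forall>z\<in>v ` {..k}. 0 < U z) \<and> sum U (v ` {..k}) = 1 \<and> (\<Sum>z\<in>v ` {..k}. U z *\<^sub>R z) = y}"
  proof (intro CollectI exI[of _ U] conjI)
    show "\<forall>z\<in>v ` {..k}. 0 < U z" using Uv wpos by auto
    show "sum U (v ` {..k}) = 1" using wsum by (simp add: sum.reindex[OF inj] Uv)
    show "(\<Sum>z\<in>v ` {..k}. U z *\<^sub>R z) = x + (\<Sum>j=1..k. \<beta> j *\<^sub>R u j)"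
      using comb by (simp add: sum.reindex[OF inj] Uv)
  qed
  also have "\<dots> \<subseteq> rel_interior (convex hull (v ` {..k}))"
    by (rule explicit_subset_rel_interior_convex_hull_minimal) simp
  also have "convex hull (v ` {..k}) = Ccone x k u lam"
    unfolding Ccone_eq v_def V_def ..
  finally show ?thesis .
qed


lemma final_arith:
  fixes A s R L \<gamma> fx gx :: real and m :: nat
  assumes A: "A > 0" and sA: "s / A > \<gamma> / 2" and RA: "R / A < (\<gamma> / 2) / ((m+1) * L + 1)"
    and R0: "R \<ge> 0" and L0: "L \<ge> 0" and fx: "fx \<ge> s - L * R" and gx: "gx \<le> L * R"
  shows "fx > m * gx"
proof -
  define K where "K = (m+1) * L + 1"
  have "(m+1) * L \<ge> 0" using L0 by simp
  then have K: "K > 0" by (simp add: K_def)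
  have s1: "s > (\<gamma>/2) * A" using sA A by (simp add: field_simps)
  have "R < ((\<gamma>/2) / K) * A" using RA A by (simp add: K_def field_simps)
  then have "K * R < K * (((\<gamma>/2) / K) * A)" using K by (rule mult_strict_left_mono)
  also have "\<dots> = (\<gamma>/2) * A" using K by simp
  finally have "K * R < s" using s1 by simp
  then have "(m+1) * L * R + R < s" by (simp add: K_def algebra_simps)
  then have "m * (L * R) < fx" using fx R0 by (simp add: algebra_simps)
  moreover have "m * gx \<le> m * (L * R)" using gx by (simp add: mult_left_mono)
  ultimately show ?thesis by simp
qed


lemma core:
  fixes X S F :: "(real^'n) set" and x :: "real^'n" and k :: nat
    and u :: "nat \<Rightarrow> real^'n" and lam :: "nat \<Rightarrow> real"
    and f g :: "real^'n \<Rightarrow> real" and m :: nat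
  assumes Xc: "X \<subseteq> unit_cube" and clX: "closed X"
    and tg: "k_tangent X x k u"
    and Sc: "S \<subseteq> unit_cube" and face: "F face_of S"
    and lam: "\<forall>j\<in>{1..k}. lam j > 0"
    and CS: "Ccone x k u lam \<subseteq> S" and CF: "\<not> Ccone x k u lam \<subseteq> F"
    and FX: "F \<inter> X = S \<inter> X"
    and mf: "mcnaughton f" and mg: "mcnaughton g"
    and f0: "{y \<in> unit_cube. f y = 0} = F" and g0: "{y \<in> unit_cube. g y = 0} = S"
  shows "\<exists>y\<in>X. f y > real m * g y"
proof -
  obtain xs where ON: "orthonormal_family k u" and xsX: "\<forall>i. xs i \<in> X" and LIM: "xs \<longlonglongrightarrow> x"
    and NS: "\<forall>i. xs i - x \<notin> span (u ` {1..k})"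
    and TG: "\<forall>l\<in>{1..k}. (\<lambda>i. (1 / norm (xs i - x - proj_l u (l - 1) (xs i - x))) *\<^sub>R
                            (xs i - x - proj_l u (l - 1) (xs i - x))) \<longlonglongrightarrow> u l"
    using tg unfolding k_tangent_def by blast
  have xX: "x \<in> X" using clX xsX LIM closed_sequentially by blast
  have xC: "x \<in> Ccone x k u lam"
    unfolding Ccone_def by (rule hull_inc) (auto intro!: exI[of _ 0])
  have xF: "x \<in> F" using xX xC CS FX by blast
  have fx: "f x = 0" using xF f0 by blast
  have xcube: "x \<in> unit_cube" using xX Xc by blast
  have k1: "k \<ge> 1"
  proof (rule ccontr)
    assume "\<not> k \<ge> 1"
    then have "k = 0" by simp
    then have "Ccone x k u lam = {x}" unfolding Ccone_def by simp
    then show False using CF xF by simp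
  qed
  define d where "d i = xs i - x" for i
  define \<alpha> where "\<alpha> j i = d i \<bullet> u j" for j i
  define r where "r i = ee u (Suc k) (d i)" for i
  define c where "c i = x + (\<Sum>j=1..k. \<alpha> j i *\<^sub>R u j)" for i
  have xsc: "xs i - c i = r i" for i
    by (simp add: r_def c_def ee_def proj_l_def \<alpha>_def d_def)
  note tgl = tg_pos[OF ON LIM NS TG] tg_ratio_e[OF ON LIM NS TG] tg_ratio_a[OF ON LIM NS TG]
    tg_a0[OF ON LIM NS TG] tg_e_ne[OF ON LIM NS TG]
  have apos: "eventually (\<lambda>i. \<forall>l\<in>{1..k}. \<alpha> l i > 0) sequentially"
    by (rule eventually_ball_finite) (use tgl(1) in \<open>auto simp: \<alpha>_def d_def\<close>)
  have a1: "eventually (\<lambda>i. \<alpha> 1 i < lam 1) sequentially"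
    using tgl(4)[of 1] lam k1 unfolding \<alpha>_def d_def by (intro order_tendstoD) auto
  have adec: "eventually (\<lambda>i. \<forall>l\<in>{1..<k}. \<alpha> (Suc l) i / lam (Suc l) < \<alpha> l i / lam l) sequentially"
  proof (rule eventually_ball_finite, simp, rule ballI)
    fix l assume l: "l \<in> {1..<k}"
    have l1: "l \<in> {1..k}" and l2: "Suc l \<in> {1..k}" using l by auto
    have "eventually (\<lambda>i. \<alpha> (Suc l) i / \<alpha> l i < lam (Suc l) / lam l) sequentially"
      using tgl(3)[OF l1, of "Suc l"] l lam l1 l2 unfolding \<alpha>_def d_def
      by (intro order_tendstoD) auto
    then show "eventually (\<lambda>i. \<alpha> (Suc l) i / lam (Suc l) < \<alpha> l i / lam l) sequentially"
      using apos
    proof eventually_elim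
      case (elim i)
      have p: "\<alpha> l i > 0" "lam l > 0" "lam (Suc l) > 0" using elim(2) l1 l2 lam by auto
      then show ?case using elim(1) by (simp add: field_simps)
    qed
  qed
  have crel: "eventually (\<lambda>i. c i \<in> rel_interior (Ccone x k u lam)) sequentially"
    using apos a1 adec
    by eventually_elim (unfold c_def, rule cone_point[OF ON k1 lam], auto)
  have cgood: "eventually (\<lambda>i. c i \<in> unit_cube \<and> c i \<in> S \<and> c i \<notin> F) sequentially"
    using crel
  proof eventually_elim
    case (elim i)
    have "c i \<in> Ccone x k u lam" using elim rel_interior_subset by blast
    moreover have "c i \<notin> F"
    proof
      assume "c i \<in> F"
      then have "F \<inter> rel_interior (Ccone x k u lam) \<noteq> {}" using elim by blast
      then have "Ccone x k u lam \<subseteq> F" by (rule subset_of_face_of[OF face CS])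
      then show False using CF by simp
    qed
    ultimately show ?case using CS Sc by blast
  qed
  obtain Lf where Lf: "Lf \<ge> 0" "\<forall>y\<in>unit_cube. \<forall>z\<in>unit_cube. \<bar>f y - f z\<bar> \<le> Lf * norm (y - z)"
    using mcn_lipschitz[OF mf] by blast
  obtain Lg where Lg: "Lg \<ge> 0" "\<forall>y\<in>unit_cube. \<forall>z\<in>unit_cube. \<bar>g y - g z\<bar> \<le> Lg * norm (y - z)"
    using mcn_lipschitz[OF mg] by blast
  define L where "L = Lf + Lg"
  have L0: "L \<ge> 0" using Lf Lg by (simp add: L_def)
  have lipb: "eventually (\<lambda>i. f (xs i) \<ge> f (c i) - L * norm (r i) \<and> g (xs i) \<le> L * norm (r i)
       \<and> f (c i) > 0) sequentially"
    using cgood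
  proof eventually_elim
    case (elim i)
    have xsi: "xs i \<in> unit_cube" using xsX Xc by blast
    have "\<bar>f (xs i) - f (c i)\<bar> \<le> Lf * norm (r i)" using Lf(2) xsi elim xsc by metis
    moreover have "\<bar>g (xs i) - g (c i)\<bar> \<le> Lg * norm (r i)" using Lg(2) xsi elim xsc by metis
    moreover have "g (c i) = 0" using elim g0 by blast
    moreover have "f (c i) \<noteq> 0" using elim f0 by blast
    moreover have "f (c i) \<ge> 0" using mcn_bounds[OF mf] elim by blast
    moreover have "Lf * norm (r i) \<le> L * norm (r i)" "Lg * norm (r i) \<le> L * norm (r i)"
      using Lf Lg by (auto simp: L_def intro!: mult_right_mono)
    ultimately show ?case by auto
  qed
  obtain P :: "((real^'n) \<times> real) set" where P: "finite P"
    "\<forall>y\<in>(unit_cube::(real^'n) set). \<exists>(a,b)\<in>P. f y = a \<bullet> y + b"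
    and fc: "continuous_on unit_cube f"
    using mf unfolding mcnaughton_def by blast
  have "frequently (\<lambda>i. \<exists>p\<in>P. f (c i) = fst p \<bullet> c i + snd p) sequentially"
    by (rule eventually_frequently[OF sequentially_bot])
       (use cgood P(2) in \<open>force elim!: eventually_mono\<close>)
  then obtain a b where ab: "(a,b) \<in> P" "frequently (\<lambda>i. f (c i) = a \<bullet> c i + b) sequentially"
    using frequently_bex_finite[OF P(1)] by force
  define G where "G = inf sequentially (principal {i. f (c i) = a \<bullet> c i + b})"
  have Gnb: "G \<noteq> bot"
  proof
    assume "G = bot"
    then have "eventually (\<lambda>i. False) G" by simp
    then have "eventually (\<lambda>i. \<not> f (c i) = a \<bullet> c i + b) sequentially"
      unfolding G_def eventually_inf_principal by simp
    then show False using ab(2) by (simp add: frequently_def)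
  qed
  have GS: "G \<le> sequentially" by (simp add: G_def)
  have evG: "eventually Q G" if "eventually Q sequentially" for Q
    using filter_leD[OF GS that] .
  have pieceG: "eventually (\<lambda>i. f (c i) = a \<bullet> c i + b) G"
    unfolding G_def eventually_inf_principal by simp
  have cx: "c \<longlonglongrightarrow> x"
  proof -
    have "(\<lambda>i. x + (\<Sum>j=1..k. \<alpha> j i *\<^sub>R u j)) \<longlonglongrightarrow> x + (\<Sum>j=1..k. 0 *\<^sub>R u j)"
      by (intro tendsto_intros) (use tgl(4) in \<open>simp add: \<alpha>_def d_def\<close>)
    then show ?thesis by (simp add: c_def[abs_def])
  qed
  have fcx: "(\<lambda>i. f (c i)) \<longlonglongrightarrow> 0"
  proof -
    have "eventually (\<lambda>i. c i \<in> unit_cube) sequentially" using cgood by (auto elim: eventually_mono)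
    then show ?thesis using continuous_on_tendsto_compose[OF fc cx xcube] fx by simp
  qed
  have abx: "a \<bullet> x + b = 0"
  proof -
    have "((\<lambda>i. f (c i)) \<longlongrightarrow> 0) G" using fcx GS by (rule tendsto_mono[rotated])
    then have l1: "((\<lambda>i. a \<bullet> c i + b) \<longlongrightarrow> 0) G" using pieceG by (rule Lim_transform_eventually)
    have "((\<lambda>i. a \<bullet> c i + b) \<longlongrightarrow> a \<bullet> x + b) G"
      by (intro tendsto_intros tendsto_mono[OF GS cx])
    then show ?thesis using tendsto_unique[OF Gnb _ l1] by blast
  qed
  define \<gamma> where "\<gamma> j = a \<bullet> u j" for j
  define s where "s i = (\<Sum>j=1..k. \<gamma> j * \<alpha> j i)" for i
  have fcs: "eventually (\<lambda>i. f (c i) = s i) G"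
    using pieceG
  proof eventually_elim
    case (elim i)
    have "a \<bullet> c i + b = (a \<bullet> x + b) + (\<Sum>j=1..k. \<alpha> j i * (a \<bullet> u j))"
      by (simp add: c_def inner_add_right inner_sum_right)
    then show ?case using elim abx by (simp add: s_def \<gamma>_def mult.commute)
  qed
  have spos: "eventually (\<lambda>i. s i > 0) G"
    using fcs evG[OF lipb] by eventually_elim auto
  define L0 where "L0 = {j\<in>{1..k}. \<gamma> j \<noteq> 0}"
  have finL0: "finite L0" by (simp add: L0_def)
  have L0ne: "L0 \<noteq> {}"
  proof
    assume "L0 = {}"
    then have "s i = 0" for i by (auto simp: s_def L0_def intro!: sum.neutral)
    then have "eventually (\<lambda>i. False) G" using spos by simp
    then show False using Gnb by simp
  qed
  define ls where "ls = Min L0"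
  have lsL0: "ls \<in> L0" unfolding ls_def using finL0 L0ne by (rule Min_in)
  have ls1: "ls \<in> {1..k}" and gls: "\<gamma> ls \<noteq> 0" using lsL0 by (auto simp: L0_def)
  have glow: "\<gamma> j = 0" if "j \<in> {1..k}" "j < ls" for j
  proof (rule ccontr)
    assume "\<gamma> j \<noteq> 0"
    then have "j \<in> L0" using that by (simp add: L0_def)
    then have "ls \<le> j" unfolding ls_def using finL0 by simp
    then show False using that by simp
  qed
  have rho: "(\<lambda>i. s i / \<alpha> ls i) \<longlonglongrightarrow> \<gamma> ls"
  proof -
    have "(\<lambda>i. \<Sum>j\<in>{1..k}. \<gamma> j * (\<alpha> j i / \<alpha> ls i)) \<longlonglongrightarrow> (\<Sum>j\<in>{1..k}. if j = ls then \<gamma> j else 0)"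
    proof (intro tendsto_sum)
      fix j assume j: "j \<in> {1..k}"
      consider "j < ls" | "j = ls" | "ls < j" by linarith
      then show "(\<lambda>i. \<gamma> j * (\<alpha> j i / \<alpha> ls i)) \<longlonglongrightarrow> (if j = ls then \<gamma> j else 0)"
      proof cases
        case 1 then show ?thesis using glow[OF j] by simp
      next
        case 2
        have "eventually (\<lambda>i. \<gamma> j = \<gamma> j * (\<alpha> j i / \<alpha> ls i)) sequentially"
          using apos
        proof eventually_elim
          case (elim i)
          then have "\<alpha> ls i > 0" using ls1 by blast
          then show ?case using 2 by simp
        qed
        then show ?thesis using 2 by (auto intro: Lim_transform_eventually[OF tendsto_const])
      next
        case 3
        have "(\<lambda>i. \<alpha> j i / \<alpha> ls i) \<longlonglongrightarrow> 0"
          using tgl(3)[OF ls1 3] j by (simp add: \<alpha>_def d_def)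
        then have "(\<lambda>i. \<gamma> j * (\<alpha> j i / \<alpha> ls i)) \<longlonglongrightarrow> \<gamma> j * 0"
          by (intro tendsto_mult tendsto_const)
        then show ?thesis using 3 by simp
      qed
    qed
    moreover have "(\<Sum>j\<in>{1..k}. if j = ls then \<gamma> j else 0) = \<gamma> ls"
      using ls1 by (simp add: sum.delta')
    moreover have "(\<Sum>j\<in>{1..k}. \<gamma> j * (\<alpha> j i / \<alpha> ls i)) = s i / \<alpha> ls i" for i
      by (simp add: s_def sum_divide_distrib)
    ultimately show ?thesis by simp
  qed
  have gpos: "\<gamma> ls > 0"
  proof -
    have "eventually (\<lambda>i. 0 \<le> s i / \<alpha> ls i) G"
      using spos evG[OF apos]
    proof eventually_elim
      case (elim i)
      then have "\<alpha> ls i > 0" using ls1 by blast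
      then show ?case using elim(1) by simp
    qed
    then have "0 \<le> \<gamma> ls" using tendsto_lowerbound[OF tendsto_mono[OF GS rho] _ Gnb] by blast
    then show ?thesis using gls by simp
  qed
  define \<epsilon> where "\<epsilon> = (\<gamma> ls / 2) / ((m+1) * L + 1)"
  have eps: "\<epsilon> > 0" unfolding \<epsilon>_def using gpos L0 by (intro divide_pos_pos add_nonneg_pos) auto
  have rA: "eventually (\<lambda>i. norm (r i) / \<alpha> ls i < \<epsilon>) sequentially"
    using tgl(2)[OF ls1, of "Suc k"] ls1 eps unfolding r_def \<alpha>_def d_def
    by (intro order_tendstoD) auto
  have sA: "eventually (\<lambda>i. s i / \<alpha> ls i > \<gamma> ls / 2) sequentially"
    using rho gpos by (intro order_tendstoD) auto
  have "eventually (\<lambda>i. f (xs i) > real m * g (xs i)) G"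
    using evG[OF apos] evG[OF rA] evG[OF sA] evG[OF lipb] fcs
  proof eventually_elim
    case (elim i)
    show ?case
      by (rule final_arith[where A="\<alpha> ls i" and s="s i" and \<gamma>="\<gamma> ls" and R="norm (r i)"
            and m=m and L=L and fx="f (xs i)" and gx="g (xs i)"])
        (use elim ls1 L0 in \<open>auto simp: \<epsilon>_def\<close>)
  qed
  then obtain i where "f (xs i) > real m * g (xs i)" using eventually_happens'[OF Gnb] by blast
  then show ?thesis using xsX by blast
qed


lemma mv_mult_in_ideal:
  assumes "mv_ideal X J" "a \<in> J"
  shows "mv_mult N a \<in> J"
  using assms by (induction N) (auto simp: mv_ideal_def)

lemma not_ss:
  fixes X :: "(real^'n) set" and f g :: "real^'n \<Rightarrow> real"
  assumes Xc: "X \<subseteq> unit_cube" and clX: "closed X"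
    and mf: "mcnaughton f" and mg: "mcnaughton g"
    and zero: "\<forall>y\<in>X. f y = 0 \<longleftrightarrow> g y = 0"
    and notin: "restr X f \<notin> principal_ideal X (restr X g)"
  shows "\<not> strongly_semisimple X"
proof
  assume ss: "strongly_semisimple X"
  define a where "a = restr X g"
  have aM: "a \<in> MX X" unfolding a_def MX_def using mg by blast
  have fM: "restr X f \<in> MX X" unfolding MX_def using mf by blast
  obtain \<M> where Mmax: "\<forall>J\<in>\<M>. maximal_mv_ideal X J"
    and Peq: "principal_ideal X a = MX X \<inter> \<Inter>\<M>"
    using ss aM unfolding strongly_semisimple_def by meson
  have fB: "0 \<le> f y \<and> f y \<le> 1" "0 \<le> g y \<and> g y \<le> 1" if "y \<in> X" for y
    using mcn_bounds[OF mf] mcn_bounds[OF mg] that Xc by blast+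
  have aP: "a \<in> principal_ideal X a"
    unfolding principal_ideal_def
  proof (intro CollectI conjI aM exI[of _ "1::nat"] ballI)
    fix y assume "y \<in> X"
    then show "a y \<le> mv_mult 1 a y" using fB[of y] by (simp add: mv_oplus_def a_def restr_def)
  qed simp
  have "restr X f \<in> \<Inter>\<M>"
  proof
    fix J assume JM: "J \<in> \<M>"
    then have id: "mv_ideal X J" and JneM: "J \<noteq> MX X"
      and maxJ: "\<forall>J'. mv_ideal X J' \<and> J \<subseteq> J' \<longrightarrow> J' = J \<or> J' = MX X"
      using Mmax unfolding maximal_mv_ideal_def by auto
    have aJ: "a \<in> J" using aP Peq JM by blast
    have JM': "J \<subseteq> MX X" using id unfolding mv_ideal_def by blast
    have J0: "(\<lambda>y. 0) \<in> J" using id unfolding mv_ideal_def by blast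
    have Jdown: "\<And>c b. c \<in> J \<Longrightarrow> b \<in> MX X \<Longrightarrow> (\<forall>y\<in>X. b y \<le> c y) \<Longrightarrow> b \<in> J"
      using id unfolding mv_ideal_def by blast
    have Jplus: "\<And>c b. c \<in> J \<Longrightarrow> b \<in> J \<Longrightarrow> mv_oplus c b \<in> J"
      using id unfolding mv_ideal_def by blast
    have JB: "0 \<le> c y \<and> c y \<le> 1" if "c \<in> J" "y \<in> X" for c y
      using MX_bounds[OF Xc] JM' that by blast
    show "restr X f \<in> J"
    proof (rule ccontr)
      assume fnJ: "restr X f \<notin> J"
      define J' where "J' = {b \<in> MX X. \<exists>j\<in>J. \<exists>m::nat. \<forall>y\<in>X. b y \<le> j y + m * f y}"
      have "mv_ideal X J'"
        unfolding mv_ideal_def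
      proof (intro conjI ballI impI)
        show "J' \<subseteq> MX X" unfolding J'_def by blast
        show "(\<lambda>y. 0) \<in> J'" unfolding J'_def using MX_zero J0 JB
          by (auto intro!: bexI[of _ "\<lambda>y. 0"] exI[of _ "0::nat"])
      next
        fix c b assume "c \<in> J'" "b \<in> MX X" "\<forall>y\<in>X. b y \<le> c y"
        then show "b \<in> J'" unfolding J'_def by (fastforce intro: order_trans)
      next
        fix c b assume c: "c \<in> J'" and b: "b \<in> J'"
        obtain j1 and m1 :: nat where j1: "j1 \<in> J" "\<forall>y\<in>X. c y \<le> j1 y + m1 * f y" and cM: "c \<in> MX X"
          using c unfolding J'_def by blast
        obtain j2 and m2 :: nat where j2: "j2 \<in> J" "\<forall>y\<in>X. b y \<le> j2 y + m2 * f y" and bM: "b \<in> MX X"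
          using b unfolding J'_def by blast
        have "\<forall>y\<in>X. mv_oplus c b y \<le> mv_oplus j1 j2 y + (m1 + m2) * f y"
        proof
          fix y assume y: "y \<in> X"
          have "c y + b y \<le> j1 y + j2 y + (m1 + m2) * f y"
          proof -
            have "real (m1 + m2) * f y = real m1 * f y + real m2 * f y" by (simp add: distrib_right)
            then show ?thesis using j1(2)[rule_format, OF y] j2(2)[rule_format, OF y] by linarith
          qed
          moreover have "(m1 + m2) * f y \<ge> 0" using fB[OF y] by simp
          ultimately show "mv_oplus c b y \<le> mv_oplus j1 j2 y + (m1 + m2) * f y"
            unfolding mv_oplus_def by linarith
        qed
        then show "mv_oplus c b \<in> J'"
          unfolding J'_def using MX_oplus[OF cM bM] Jplus[OF j1(1) j2(1)] by blast
      qed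
      moreover have "J \<subseteq> J'"
      proof
        fix b assume "b \<in> J"
        then show "b \<in> J'" unfolding J'_def using JM' by (auto intro!: exI[of _ "0::nat"])
      qed
      ultimately have "J' = J \<or> J' = MX X" using maxJ by blast
      moreover have "restr X f \<in> J'"
        unfolding J'_def using fM J0 fB
        by (auto intro!: bexI[of _ "\<lambda>y. 0"] exI[of _ "1::nat"] simp: restr_def)
      ultimately have J'M: "J' = MX X" using fnJ by blast
      then have "restr X (\<lambda>y. 1) \<in> J'" using MX_one by blast
      then obtain j m where jJ: "j \<in> J" and jm: "\<forall>y\<in>X. 1 \<le> j y + real m * f y"
        unfolding J'_def by (auto simp: restr_def)
      obtain h where mh: "mcnaughton h" and jh: "j = restr X h"
        using JM' jJ unfolding MX_def by blast
      have hc: "continuous_on X h" using mh Xc unfolding mcnaughton_def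
        by (auto intro: continuous_on_subset)
      have gc: "continuous_on X g" using mg Xc unfolding mcnaughton_def
        by (auto intro: continuous_on_subset)
      define K where "K = {y \<in> X. h y \<le> 1/2}"
      have clK: "closed K" unfolding K_def
        by (rule continuous_on_closed_Collect_le[OF hc continuous_on_const clX])
      have "bounded K" unfolding K_def unit_cube_def
        using Xc unit_cube_def bounded_cbox bounded_subset by (metis (no_types, lifting) mem_Collect_eq subsetI subset_iff)
      then have cK: "compact K" using clK by (simp add: compact_eq_bounded_closed)
      have gK: "g y > 0" if "y \<in> K" for y
      proof -
        have y: "y \<in> X" "h y \<le> 1/2" using that by (auto simp: K_def)
        then have "1 \<le> h y + real m * f y" using jm jh by (auto simp: restr_def)
        then have "f y \<noteq> 0" using y by auto
        then have "g y \<noteq> 0" using zero y by auto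
        then show ?thesis using fB[OF y(1)] by auto
      qed
      obtain \<delta> where dpos: "\<delta> > 0" and dK: "\<forall>y\<in>K. \<delta> \<le> g y"
      proof (cases "K = {}")
        case True then show ?thesis using that[of 1] by auto
      next
        case False
        obtain y0 where "y0 \<in> K" "\<forall>y\<in>K. g y0 \<le> g y"
          using continuous_attains_inf[OF cK False continuous_on_subset[OF gc]] K_def by auto
        then show ?thesis using that[of "g y0"] gK by auto
      qed
      obtain N :: nat where N: "1 / \<delta> \<le> real N" using real_arch_simple by blast
      have Nd: "1 \<le> real N * \<delta>" using N dpos by (simp add: field_simps)
      define t where "t = mv_oplus (mv_oplus j j) (mv_mult N a)"
      have tJ: "t \<in> J" unfolding t_def using Jplus jJ mv_mult_in_ideal[OF id aJ] by blast
      have t1: "1 \<le> t y" if y: "y \<in> X" for y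
      proof -
        have ma: "mv_mult N a y = min 1 (real N * g y)"
          using mv_mult_eq[of a y N] fB[OF y] y by (simp add: a_def restr_def)
        have jy: "j y = h y" using y by (simp add: jh restr_def)
        have j0: "0 \<le> j y" using JB[OF jJ y] by simp
        have g0: "0 \<le> g y" using fB[OF y] by simp
        show ?thesis
        proof (cases "h y \<le> 1/2")
          case True
          then have "y \<in> K" using y by (simp add: K_def)
          then have "\<delta> \<le> g y" using dK by blast
          then have "real N * \<delta> \<le> real N * g y" by (simp add: mult_left_mono)
          then have "1 \<le> real N * g y" using Nd by simp
          then show ?thesis using j0 by (simp add: t_def mv_oplus_def ma)
        next
          case False
          then have "1 \<le> j y + j y" using jy by simp
          then show ?thesis using g0 by (simp add: t_def mv_oplus_def ma)
        qed
      qed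
      have "MX X \<subseteq> J"
      proof
        fix b assume b: "b \<in> MX X"
        have "\<forall>y\<in>X. b y \<le> t y" using MX_bounds[OF Xc b] t1 by (auto intro: order_trans)
        then show "b \<in> J" using Jdown[OF tJ b] by blast
      qed
      then show False using JneM JM' by blast
    qed
  qed
  then have "restr X f \<in> principal_ideal X a" using Peq fM by blast
  then show False using notin a_def by simp
qed


theorem mainTheorem6:
  fixes X S F :: "(real^'n) set" and x :: "real^'n" and k :: nat
    and u :: "nat \<Rightarrow> real^'n" and lam :: "nat \<Rightarrow> real"
    and f g :: "real^'n \<Rightarrow> real"
  assumes "X \<subseteq> unit_cube" and "closed X"
    and "k_tangent X x k u"
    and "rational_simplex S" and "S \<subseteq> unit_cube" and "F face_of S"
    and "\<forall>j\<in>{1..k}. lam j > 0"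
    and "Ccone x k u lam \<subseteq> S" and "\<not> Ccone x k u lam \<subseteq> F"
    and "F \<inter> X = S \<inter> X"
    and "mcnaughton f" and "mcnaughton g"
    and "{y \<in> unit_cube. f y = 0} = F" and "{y \<in> unit_cube. g y = 0} = S"
  shows "{y \<in> X. restr X f y = 0} = {y \<in> X. restr X g y = 0}
    \<and> (\<forall>z\<in>X. restr X f \<in> {h \<in> MX X. h z = 0} \<longleftrightarrow> restr X g \<in> {h \<in> MX X. h z = 0})
    \<and> restr X f \<notin> principal_ideal X (restr X g)
    \<and> \<not> (\<exists>m::nat. m > 0 \<and> (\<forall>y\<in>X. restr X f y \<le> mv_mult m (restr X g) y))
    \<and> \<not> strongly_semisimple X"
proof -
  note A = assms
  have zero: "\<forall>y\<in>X. f y = 0 \<longleftrightarrow> g y = 0"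
  proof
    fix y assume y: "y \<in> X"
    then have yc: "y \<in> unit_cube" using A(1) by blast
    have "f y = 0 \<longleftrightarrow> y \<in> F" using A(13) yc by blast
    also have "\<dots> \<longleftrightarrow> y \<in> S" using A(10) y by blast
    also have "\<dots> \<longleftrightarrow> g y = 0" using A(14) yc by blast
    finally show "f y = 0 \<longleftrightarrow> g y = 0" .
  qed
  have P1: "{y \<in> X. restr X f y = 0} = {y \<in> X. restr X g y = 0}"
    using zero by (auto simp: restr_def)
  have fM: "restr X f \<in> MX X" and gM: "restr X g \<in> MX X"
    unfolding MX_def using A(11,12) by blast+
  have P2: "\<forall>z\<in>X. restr X f \<in> {h \<in> MX X. h z = 0} \<longleftrightarrow> restr X g \<in> {h \<in> MX X. h z = 0}"
    using zero fM gM by (auto simp: restr_def)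
  have P4: "\<not> (\<exists>m::nat. m > 0 \<and> (\<forall>y\<in>X. restr X f y \<le> mv_mult m (restr X g) y))"
  proof
    assume "\<exists>m::nat. m > 0 \<and> (\<forall>y\<in>X. restr X f y \<le> mv_mult m (restr X g) y)"
    then obtain m :: nat where m: "\<forall>y\<in>X. restr X f y \<le> mv_mult m (restr X g) y" by blast
    obtain y where y: "y \<in> X" "f y > real m * g y"
      using core[OF A(1,2,3,5,6,7,8,9,10,11,12,13,14), of m] by blast
    have yc: "y \<in> unit_cube" using y A(1) by blast
    have "mv_mult m (restr X g) y = min 1 (real m * g y)"
      using mv_mult_eq[of "restr X g" y m] mcn_bounds[OF A(12) yc] y by (simp add: restr_def)
    then have "mv_mult m (restr X g) y \<le> real m * g y" by simp
    moreover have "restr X f y = f y" using y by (simp add: restr_def)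
    ultimately show False using m y by force
  qed
  have P3: "restr X f \<notin> principal_ideal X (restr X g)"
    using P4 unfolding principal_ideal_def by blast
  have P5: "\<not> strongly_semisimple X"
    by (rule not_ss[OF A(1,2,11,12) zero P3])
  show ?thesis using P1 P2 P3 P4 P5 by blast
qed


end
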